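(* Let $G=(V,E)$ be a finite connected graph and $W\subseteq V$ nonempty. Let $\ell\ge1$ be an integer and $\gamma=(\gamma_0,\dots,\gamma_\ell)$ a simple path in $G$ with $v=\gamma_0$, $\gamma_0,\dots,\gamma_{\ell-1}\notin W$ and $\gamma_\ell=u\in W$. Let $X$ be a lazy random walk started at $v$. Then $$\mathbb E\left[\tau_u\ \middle|\ \mathsf{LE}(X[0,\tau_W])=\gamma,\ \tau_u=\tau_W\right]\le \ell\cdot\mathcal B_W(G).$$
   Context: The lazy random walk $(X_t)$ on $G$ at each step stays put with probability $1/2$ and otherwise moves along a uniformly chosen edge incident to the current vertex. For nonempty $U\subseteq V$, $\tau_U=\min\{t\ge0:X_t\in U\}$, $\tau_u=\tau_{\{u\}}$. For nonempty $W\subseteq V$, $\mathbf p_W^t(u,v)=\Pr(X_t=v\text{ and }\{X_0,\dots,X_t\}\cap W=\varnothing\mid X_0=u)$, and the $W$-bubble sum is $\mathcal B_W(G)=\sum_{t=0}^\infty(t+1)\sup_{v\in V}\mathbf p_W^t(v,v)$ (finite). For a walk $X=(X_0,\dots,X_L)$, $X[0,L]$ denotes the walk itself and its loop-erasure $\mathsf{LE}(X)$ is defined by $\mathsf{LE}(X)_0=X_0$ and, given $\mathsf{LE}(X)_{j-1}$, letting $i=\max\{t:X_t=\mathsf{LE}(X)_{j-1}\}$: if $i<L$ set $\mathsf{LE}(X)_j=X_{i+1}$, otherwise stop. *)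

theory Defs
  imports "HOL-Analysis.Analysis"
begin

definition simple_graph :: "'a set \<Rightarrow> ('a \<Rightarrow> 'a \<Rightarrow> bool) \<Rightarrow> bool" where
  "simple_graph V E \<longleftrightarrow> finite V \<and> (\<forall>x y. E x y \<longrightarrow> x \<in> V \<and> y \<in> V)
     \<and> (\<forall>x y. E x y \<longrightarrow> E y x) \<and> (\<forall>x. \<not> E x x)"

definition graph_connected :: "'a set \<Rightarrow> ('a \<Rightarrow> 'a \<Rightarrow> bool) \<Rightarrow> bool" where
  "graph_connected V E \<longleftrightarrow> (\<forall>x\<in>V. \<forall>y\<in>V. E\<^sup>*\<^sup>* x y)"

definition deg :: "'a set \<Rightarrow> ('a \<Rightarrow> 'a \<Rightarrow> bool) \<Rightarrow> 'a \<Rightarrow> nat" where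
  "deg V E x = card {y\<in>V. E x y}"

definition lazy_P :: "'a set \<Rightarrow> ('a \<Rightarrow> 'a \<Rightarrow> bool) \<Rightarrow> 'a \<Rightarrow> 'a \<Rightarrow> real" where
  "lazy_P V E x y = (if x = y then 1/2 else 0) + (if E x y then 1 / (2 * real (deg V E x)) else 0)"

definition path_prob :: "'a set \<Rightarrow> ('a \<Rightarrow> 'a \<Rightarrow> bool) \<Rightarrow> 'a list \<Rightarrow> ennreal" where
  "path_prob V E w = (\<Prod>i<length w - 1. ennreal (lazy_P V E (w ! i) (w ! Suc i)))"

definition killed_p :: "'a set \<Rightarrow> ('a \<Rightarrow> 'a \<Rightarrow> bool) \<Rightarrow> 'a set \<Rightarrow> nat \<Rightarrow> 'a \<Rightarrow> 'a \<Rightarrow> ennreal" where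
  "killed_p V E W t a b = (\<Sum>w\<in>{w. length w = Suc t \<and> set w \<subseteq> V \<and> w ! 0 = a \<and> w ! t = b
        \<and> set w \<inter> W = {}}. path_prob V E w)"

definition bubble_sum :: "'a set \<Rightarrow> ('a \<Rightarrow> 'a \<Rightarrow> bool) \<Rightarrow> 'a set \<Rightarrow> ennreal" where
  "bubble_sum V E W = (\<Sum>t. of_nat (t + 1) * (SUP x\<in>V. killed_p V E W t x x))"

definition last_idx :: "'a \<Rightarrow> 'a list \<Rightarrow> nat" where
  "last_idx x ys = Max {t. t < length ys \<and> ys ! t = x}"

function loop_erase :: "'a list \<Rightarrow> 'a list" where
  "loop_erase [] = []"
| "loop_erase (x # xs) = x # loop_erase (drop (last_idx x (x # xs)) xs)"
  by pat_completeness auto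
termination by (relation "Wellfounded.measure length") auto

definition event_paths :: "'a set \<Rightarrow> 'a set \<Rightarrow> 'a \<Rightarrow> 'a \<Rightarrow> 'a list \<Rightarrow> nat \<Rightarrow> 'a list set" where
  "event_paths V W v u \<gamma> T = {w. length w = Suc T \<and> set w \<subseteq> V \<and> w ! 0 = v
      \<and> (\<forall>i<T. w ! i \<notin> W) \<and> w ! T = u \<and> loop_erase w = \<gamma>}"

definition event_prob :: "'a set \<Rightarrow> ('a \<Rightarrow> 'a \<Rightarrow> bool) \<Rightarrow> 'a set \<Rightarrow> 'a \<Rightarrow> 'a \<Rightarrow> 'a list \<Rightarrow> ennreal" where
  "event_prob V E W v u \<gamma> = (\<Sum>T. \<Sum>w\<in>event_paths V W v u \<gamma> T. path_prob V E w)"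

definition event_time :: "'a set \<Rightarrow> ('a \<Rightarrow> 'a \<Rightarrow> bool) \<Rightarrow> 'a set \<Rightarrow> 'a \<Rightarrow> 'a \<Rightarrow> 'a list \<Rightarrow> ennreal" where
  "event_time V E W v u \<gamma> = (\<Sum>T. of_nat T * (\<Sum>w\<in>event_paths V W v u \<gamma> T. path_prob V E w))"

text \<open>Conditional expectation E[tau_u | LE(X[0,tau_W]) = gamma, tau_u = tau_W] for the walk from v.\<close>
definition cond_exp_hit :: "'a set \<Rightarrow> ('a \<Rightarrow> 'a \<Rightarrow> bool) \<Rightarrow> 'a set \<Rightarrow> 'a \<Rightarrow> 'a \<Rightarrow> 'a list \<Rightarrow> ennreal" where
  "cond_exp_hit V E W v u \<gamma> = event_time V E W v u \<gamma> / event_prob V E W v u \<gamma>"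

end

theory Submission imports Defs begin

lemma cauchy_reindex:
  fixes h :: "nat \<Rightarrow> nat \<Rightarrow> ennreal"
  shows "(\<Sum>T<N. \<Sum>a<T. h a (T - Suc a)) = (\<Sum>p\<in>(\<lambda>(T,a). (a, T - Suc a)) ` (SIGMA T:{..<N}. {..<T}). h (fst p) (snd p))"
proof -
  have inj: "inj_on (\<lambda>(T,a). (a, T - Suc a)) (SIGMA T:{..<N}. {..<T})"
    by (auto simp: inj_on_def)
  show ?thesis
    by (simp only: sum.reindex[OF inj]) (simp add: sum.Sigma case_prod_beta)
qed

lemma cauchy_ennreal:
  fixes h :: "nat \<Rightarrow> nat \<Rightarrow> ennreal"
  shows "(\<Sum>T. \<Sum>a<T. h a (T - Suc a)) = (\<Sum>a. \<Sum>b. h a b)"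
proof (rule antisym)
  show "(\<Sum>T. \<Sum>a<T. h a (T - Suc a)) \<le> (\<Sum>a. \<Sum>b. h a b)"
  proof (rule suminf_le_const[OF summableI])
    fix N
    have "(\<Sum>T<N. \<Sum>a<T. h a (T - Suc a)) \<le> (\<Sum>p\<in>{..<N}\<times>{..<N}. h (fst p) (snd p))"
      unfolding cauchy_reindex by (rule sum_mono2) auto
    also have "\<dots> = (\<Sum>a<N. \<Sum>b<N. h a b)"
      by (simp add: sum.cartesian_product case_prod_beta)
    also have "\<dots> \<le> (\<Sum>a<N. \<Sum>b. h a b)" by (intro sum_mono sum_le_suminf) auto
    also have "\<dots> \<le> (\<Sum>a. \<Sum>b. h a b)" by (intro sum_le_suminf) auto
    finally show "(\<Sum>T<N. \<Sum>a<T. h a (T - Suc a)) \<le> (\<Sum>a. \<Sum>b. h a b)" .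
  qed
next
  show "(\<Sum>a. \<Sum>b. h a b) \<le> (\<Sum>T. \<Sum>a<T. h a (T - Suc a))"
  proof (rule suminf_le_const[OF summableI])
    fix A
    have "(\<Sum>a<A. \<Sum>b. h a b) = (\<Sum>b. \<Sum>a<A. h a b)" by (rule suminf_sum[symmetric]) auto
    also have "\<dots> \<le> (\<Sum>T. \<Sum>a<T. h a (T - Suc a))"
    proof (rule suminf_le_const[OF summableI])
      fix B
      have "(\<Sum>b<B. \<Sum>a<A. h a b) = (\<Sum>p\<in>{..<A}\<times>{..<B}. h (fst p) (snd p))"
        by (subst sum.swap) (simp add: sum.cartesian_product case_prod_beta)
      also have "\<dots> \<le> (\<Sum>T<A+B. \<Sum>a<T. h a (T - Suc a))"
        unfolding cauchy_reindex
      proof (rule sum_mono2)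
        show "{..<A} \<times> {..<B} \<subseteq> (\<lambda>(T, a). (a, T - Suc a)) ` (SIGMA T:{..<A + B}. {..<T})"
        proof
          fix p assume "p \<in> {..<A} \<times> {..<B}"
          then show "p \<in> (\<lambda>(T, a). (a, T - Suc a)) ` (SIGMA T:{..<A + B}. {..<T})"
            by (intro image_eqI[where x="(fst p + snd p + 1, fst p)"]) auto
        qed
      qed auto
      also have "\<dots> \<le> (\<Sum>T. \<Sum>a<T. h a (T - Suc a))" by (intro sum_le_suminf) auto
      finally show "(\<Sum>b<B. \<Sum>a<A. h a b) \<le> (\<Sum>T. \<Sum>a<T. h a (T - Suc a))" .
    qed
    finally show "(\<Sum>a<A. \<Sum>b. h a b) \<le> (\<Sum>T. \<Sum>a<T. h a (T - Suc a))" .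
  qed
qed

lemma path_prob_single[simp]: "path_prob V E [x] = 1"
  by (simp add: path_prob_def)

lemma path_prob_cons2: "path_prob V E (x # y # zs) = ennreal (lazy_P V E x y) * path_prob V E (y # zs)"
  unfolding path_prob_def by (simp add: prod.lessThan_Suc_shift del: prod.lessThan_Suc)

lemma path_prob_append:
  assumes "xs \<noteq> []" "ys \<noteq> []"
  shows "path_prob V E (xs @ ys) = path_prob V E xs * ennreal (lazy_P V E (last xs) (hd ys)) * path_prob V E ys"
  using assms(1)
proof (induction xs rule: induct_list012)
  case (2 x)
  then show ?case using assms(2) by (cases ys) (simp_all add: path_prob_cons2)
next
  case (3 x y zs)
  then show ?case by (simp add: path_prob_cons2 mult.assoc)
qed simp

lemma loop_erase_nil_iff[simp]: "loop_erase w = [] \<longleftrightarrow> w = []"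
  by (cases w) auto

lemma loop_erase_hd: "w \<noteq> [] \<Longrightarrow> hd (loop_erase w) = hd w"
  by (cases w) auto

lemma last_idx_props:
  assumes "x \<in> set w"
  shows "last_idx x w < length w" "w ! last_idx x w = x"
    "\<And>t. last_idx x w < t \<Longrightarrow> t < length w \<Longrightarrow> w ! t \<noteq> x"
proof -
  let ?S = "{t. t < length w \<and> w ! t = x}"
  have fin: "finite ?S" by simp
  have ne: "?S \<noteq> {}" using assms by (auto simp: in_set_conv_nth)
  have "last_idx x w \<in> ?S" unfolding last_idx_def using Max_in[OF fin ne] .
  then show "last_idx x w < length w" "w ! last_idx x w = x" by auto
  fix t assume "last_idx x w < t" "t < length w"
  show "w ! t \<noteq> x"
  proof
    assume "w ! t = x"
    then have "t \<in> ?S" using \<open>t < length w\<close> by simp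
    then have "t \<le> last_idx x w" unfolding last_idx_def using Max_ge[OF fin] by blast
    then show False using \<open>last_idx x w < t\<close> by simp
  qed
qed

lemma last_idx_append:
  assumes "length L = Suc a" "L ! a = x" "x \<notin> set w'"
  shows "last_idx x (L @ w') = a"
  unfolding last_idx_def
proof (rule Max_eqI)
  show "a \<in> {t. t < length (L @ w') \<and> (L @ w') ! t = x}"
    using assms by (auto simp: nth_append)
next
  fix t assume "t \<in> {t. t < length (L @ w') \<and> (L @ w') ! t = x}"
  then have t: "t < length (L @ w')" "(L @ w') ! t = x" by auto
  show "t \<le> a"
  proof (rule ccontr)
    assume "\<not> t \<le> a"
    then have "(L @ w') ! t = w' ! (t - Suc a)" "t - Suc a < length w'"
      using assms(1) t(1) by (auto simp: nth_append)
    then show False using t(2) assms(3) nth_mem by metis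
  qed
qed simp

definition Loops :: "'a set \<Rightarrow> 'a set \<Rightarrow> 'a \<Rightarrow> nat \<Rightarrow> 'a list set" where
  "Loops V W x a = {w. length w = Suc a \<and> set w \<subseteq> V \<and> w ! 0 = x \<and> w ! a = x \<and> set w \<inter> W = {}}"

lemma killed_p_Loops: "killed_p V E W a x x = (\<Sum>w\<in>Loops V W x a. path_prob V E w)"
  unfolding killed_p_def Loops_def ..

lemma decomp_sup:
  assumes dist: "distinct (x # gr)" and ne: "gr \<noteq> []" and lu: "last gr = u"
    and a: "a < T" and L: "L \<in> Loops V W x a"
    and w': "w' \<in> event_paths V (insert x W) (hd gr) u gr (T - Suc a)"
  shows "L @ w' \<in> event_paths V W x u (x # gr) T"
proof -
  from L have L1: "length L = Suc a" "set L \<subseteq> V" "L ! 0 = x" "L ! a = x" "set L \<inter> W = {}"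
    by (auto simp: Loops_def)
  from w' have w1: "length w' = Suc (T - Suc a)" "set w' \<subseteq> V" "w' ! 0 = hd gr"
    "\<forall>i<T - Suc a. w' ! i \<notin> insert x W" "w' ! (T - Suc a) = u" "loop_erase w' = gr"
    by (auto simp: event_paths_def)
  have ux: "u \<noteq> x" using dist ne lu by (metis distinct.simps(2) last_in_set)
  have xw: "x \<notin> set w'"
  proof
    assume "x \<in> set w'"
    then obtain i where i: "i < length w'" "w' ! i = x" by (auto simp: in_set_conv_nth)
    show False
    proof (cases "i < T - Suc a")
      case True then show ?thesis using w1(4) i by auto
    next
      case False then have "i = T - Suc a" using i w1(1) by simp
      then show ?thesis using i w1(5) ux by simp
    qed
  qed
  have len: "length (L @ w') = Suc T" using L1(1) w1(1) a by simp
  have notW: "\<forall>i<T. (L @ w') ! i \<notin> W"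
  proof (intro allI impI)
    fix i assume "i < T"
    show "(L @ w') ! i \<notin> W"
    proof (cases "i < Suc a")
      case True
      then have "L ! i \<in> set L" using L1(1) by simp
      moreover have "(L @ w') ! i = L ! i" using True L1(1) by (simp add: nth_append)
      ultimately show ?thesis using L1(5) by auto
    next
      case False then show ?thesis using L1(1) w1(4) \<open>i < T\<close> by (auto simp: nth_append)
    qed
  qed
  have lastT: "(L @ w') ! T = u" using L1(1) w1(5) a by (simp add: nth_append)
  have Lx: "L = x # tl L" using L1(1) L1(3) by (cases L) auto
  have "loop_erase (L @ w') = x # loop_erase (drop (last_idx x (L @ w')) (tl L @ w'))"
    using Lx by (metis append_Cons loop_erase.simps(2))
  also have "last_idx x (L @ w') = a" using last_idx_append[OF L1(1) L1(4) xw] .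
  also have "drop a (tl L @ w') = w'" using L1(1) by simp
  finally have "loop_erase (L @ w') = x # gr" using w1(6) by simp
  then show ?thesis using len L1 w1 notW lastT by (auto simp: event_paths_def nth_append)
qed

lemma decomp_sub:
  assumes ne: "gr \<noteq> []"
    and w: "w \<in> event_paths V W x u (x # gr) T"
  defines "k \<equiv> last_idx x w"
  shows "k < T \<and> take (Suc k) w \<in> Loops V W x k
     \<and> drop (Suc k) w \<in> event_paths V (insert x W) (hd gr) u gr (T - Suc k)"
proof -
  from w have w1: "length w = Suc T" "set w \<subseteq> V" "w ! 0 = x" "\<forall>i<T. w ! i \<notin> W"
    "w ! T = u" "loop_erase w = x # gr"
    by (auto simp: event_paths_def)
  have wx: "w = x # tl w" using w1(1) w1(3) by (cases w) auto
  have xin: "x \<in> set w" using wx by (metis list.set_intros(1))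
  note k = last_idx_props[OF xin, folded k_def]
  have "loop_erase w = x # loop_erase (drop k (tl w))"
    using wx unfolding k_def by (metis loop_erase.simps(2))
  then have le: "loop_erase (drop (Suc k) w) = gr" using w1(6) by (simp add: drop_Suc)
  then have "drop (Suc k) w \<noteq> []" using ne by auto
  then have kT: "k < T" using w1(1) by simp
  have L: "take (Suc k) w \<in> Loops V W x k"
  proof -
    have "y \<notin> W" if y: "y \<in> set (take (Suc k) w)" for y
    proof -
      obtain i where i: "i < length (take (Suc k) w)" "take (Suc k) w ! i = y"
        using y by (metis in_set_conv_nth)
      then show ?thesis using w1(4) kT by auto
    qed
    then have "set (take (Suc k) w) \<inter> W = {}" by blast
    then show ?thesis using k(1,2) w1(2,3) kT
      by (auto simp: Loops_def dest: in_set_takeD)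
  qed
  have w'0: "drop (Suc k) w ! 0 = hd gr"
    using loop_erase_hd[OF \<open>drop (Suc k) w \<noteq> []\<close>] le \<open>drop (Suc k) w \<noteq> []\<close>
    by (simp add: hd_conv_nth)
  have avoid: "\<forall>i<T - Suc k. drop (Suc k) w ! i \<notin> insert x W"
  proof (intro allI impI)
    fix i assume i: "i < T - Suc k"
    have "drop (Suc k) w ! i = w ! (Suc k + i)" using w1(1) i by simp
    moreover have "w ! (Suc k + i) \<noteq> x" using k(3)[of "Suc k + i"] i w1(1) by simp
    moreover have "w ! (Suc k + i) \<notin> W" using w1(4) i by simp
    ultimately show "drop (Suc k) w ! i \<notin> insert x W" by simp
  qed
  have "drop (Suc k) w ! (T - Suc k) = u" using w1(1,5) kT by simp
  then have "drop (Suc k) w \<in> event_paths V (insert x W) (hd gr) u gr (T - Suc k)"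
    using w1(1,2) kT w'0 avoid le by (auto simp: event_paths_def dest: in_set_dropD)
  then show ?thesis using kT L by blast
qed

lemma finite_Loops: "finite V \<Longrightarrow> finite (Loops V W x a)"
  by (rule finite_subset[OF _ finite_lists_length_eq[of V "Suc a"]]) (auto simp: Loops_def)

lemma finite_ep: "finite V \<Longrightarrow> finite (event_paths V W v u g T)"
  by (rule finite_subset[OF _ finite_lists_length_eq[of V "Suc T"]]) (auto simp: event_paths_def)

lemma notin_ep:
  assumes "w' \<in> event_paths V W' y u g b" "x \<in> W'" "u \<noteq> x"
  shows "x \<notin> set w'"
proof
  assume "x \<in> set w'"
  then obtain i where i: "i < length w'" "w' ! i = x" by (metis in_set_conv_nth)
  from assms(1) have w1: "length w' = Suc b" "\<forall>i<b. w' ! i \<notin> W'" "w' ! b = u"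
    by (auto simp: event_paths_def)
  show False
  proof (cases "i < b")
    case True then show ?thesis using w1(2) i assms(2) by auto
  next
    case False then have "i = b" using i w1(1) by simp
    then show ?thesis using i w1(3) assms(3) by simp
  qed
qed

lemma decomp_sum:
  assumes fin: "finite V" and dist: "distinct (x # gr)" and ne: "gr \<noteq> []" and lu: "last gr = u"
  shows "(\<Sum>w\<in>event_paths V W x u (x # gr) T. path_prob V E w)
    = (\<Sum>a<T. killed_p V E W a x x * ennreal (lazy_P V E x (hd gr))
         * (\<Sum>w\<in>event_paths V (insert x W) (hd gr) u gr (T - Suc a). path_prob V E w))"
proof -
  define S where "S = (SIGMA a:{..<T}. Loops V W x a \<times> event_paths V (insert x W) (hd gr) u gr (T - Suc a))"
  define g where "g = (\<lambda>(a::nat, L::'a list, w'::'a list). L @ w')"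
  have ux: "u \<noteq> x" using dist ne lu by (metis distinct.simps(2) last_in_set)
  have eq: "event_paths V W x u (x # gr) T = g ` S"
  proof
    show "g ` S \<subseteq> event_paths V W x u (x # gr) T"
      using decomp_sup[OF dist ne lu] unfolding S_def g_def by auto
  next
    show "event_paths V W x u (x # gr) T \<subseteq> g ` S"
    proof
      fix w assume w: "w \<in> event_paths V W x u (x # gr) T"
      note d = decomp_sub[OF ne w]
      have "w = g (last_idx x w, take (Suc (last_idx x w)) w, drop (Suc (last_idx x w)) w)"
        unfolding g_def by simp
      moreover have "(last_idx x w, take (Suc (last_idx x w)) w, drop (Suc (last_idx x w)) w) \<in> S"
        using d unfolding S_def by auto
      ultimately show "w \<in> g ` S" by blast
    qed
  qed
  have inj: "inj_on g S"
  proof (rule inj_onI)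
    fix p q assume p: "p \<in> S" and q: "q \<in> S" and gpq: "g p = g q"
    obtain a L w' where pp: "p = (a, L, w')" by (cases p) auto
    obtain b M z where qq: "q = (b, M, z)" by (cases q) auto
    have L: "length L = Suc a" "L ! a = x" and w': "x \<notin> set w'"
      using p pp notin_ep[OF _ _ ux, of w' V "insert x W"] by (auto simp: S_def Loops_def)
    have M: "length M = Suc b" "M ! b = x" and z: "x \<notin> set z"
      using q qq notin_ep[OF _ _ ux, of z V "insert x W"] by (auto simp: S_def Loops_def)
    have e: "L @ w' = M @ z" using gpq pp qq g_def by simp
    have "a = b" using last_idx_append[OF L w'] last_idx_append[OF M z] e by simp
    then have "L = M" "w' = z" using e L(1) M(1) by (metis append_eq_append_conv)+
    then show "p = q" using pp qq \<open>a = b\<close> by simp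
  qed
  have "(\<Sum>w\<in>event_paths V W x u (x # gr) T. path_prob V E w) = (\<Sum>p\<in>S. path_prob V E (g p))"
    unfolding eq by (rule sum.reindex[OF inj, unfolded comp_def])
  also have "\<dots> = (\<Sum>a<T. \<Sum>p\<in>Loops V W x a \<times> event_paths V (insert x W) (hd gr) u gr (T - Suc a).
        path_prob V E (g (a, p)))"
    unfolding S_def
    by (subst sum.Sigma) (use finite_Loops[OF fin] finite_ep[OF fin] in \<open>auto simp: case_prod_beta\<close>)
  also have "\<dots> = (\<Sum>a<T. \<Sum>p\<in>Loops V W x a \<times> event_paths V (insert x W) (hd gr) u gr (T - Suc a).
        path_prob V E (fst p) * ennreal (lazy_P V E x (hd gr)) * path_prob V E (snd p))"
    proof (intro sum.cong refl)
      fix a p assume a: "a \<in> {..<T}" and p: "p \<in> Loops V W x a \<times> event_paths V (insert x W) (hd gr) u gr (T - Suc a)"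
      obtain L w' where pp: "p = (L, w')" by (cases p) auto
      have L: "length L = Suc a" "L ! a = x" using p pp by (auto simp: Loops_def)
      have w': "length w' = Suc (T - Suc a)" "w' ! 0 = hd gr" using p pp by (auto simp: event_paths_def)
      have "L \<noteq> []" "w' \<noteq> []" using L w' by auto
      moreover have "last L = x" using L by (metis diff_Suc_1 last_conv_nth list.size(3) nat.distinct(1))
      moreover have "hd w' = hd gr" using w' by (metis hd_conv_nth list.size(3) nat.distinct(1))
      ultimately show "path_prob V E (g (a, p)) = path_prob V E (fst p) * ennreal (lazy_P V E x (hd gr)) * path_prob V E (snd p)"
        using pp by (simp add: g_def path_prob_append)
    qed
  also have "\<dots> = (\<Sum>a<T. killed_p V E W a x x * ennreal (lazy_P V E x (hd gr))
         * (\<Sum>w\<in>event_paths V (insert x W) (hd gr) u gr (T - Suc a). path_prob V E w))"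
    unfolding killed_p_Loops
  proof (intro sum.cong refl)
    fix a
    let ?A = "Loops V W x a" and ?B = "event_paths V (insert x W) (hd gr) u gr (T - Suc a)"
    let ?c = "ennreal (lazy_P V E x (hd gr))"
    have "(\<Sum>p\<in>?A \<times> ?B. path_prob V E (fst p) * ?c * path_prob V E (snd p))
       = (\<Sum>L\<in>?A. \<Sum>w\<in>?B. path_prob V E L * ?c * path_prob V E w)"
      by (rule sum.cartesian_product[symmetric, unfolded case_prod_beta])
    also have "\<dots> = (\<Sum>L\<in>?A. path_prob V E L) * ?c * (\<Sum>w\<in>?B. path_prob V E w)"
      by (simp add: sum_distrib_left sum_distrib_right sum.swap[of _ ?A])
    finally show "(\<Sum>p\<in>?A \<times> ?B. path_prob V E (fst p) * ?c * path_prob V E (snd p))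
       = (\<Sum>L\<in>?A. path_prob V E L) * ?c * (\<Sum>w\<in>?B. path_prob V E w)" .
  qed
  finally show ?thesis .
qed

lemma killed_p_zero:
  assumes "x \<in> V" "x \<notin> W"
  shows "killed_p V E W 0 x x = 1"
proof -
  have "Loops V W x 0 = {[x]}"
    using assms by (auto simp: Loops_def length_Suc_conv)
  then show ?thesis by (simp add: killed_p_Loops)
qed

lemma killed_p_mono:
  assumes "finite V" "W0 \<subseteq> W"
  shows "killed_p V E W a x x \<le> killed_p V E W0 a x x"
  unfolding killed_p_Loops
  by (rule sum_mono2[OF finite_Loops[OF assms(1)]]) (use assms(2) in \<open>auto simp: Loops_def\<close>)

lemma suminf_prod_ennreal:
  fixes f g :: "nat \<Rightarrow> ennreal"
  shows "(\<Sum>a. \<Sum>b. f a * g b) = (\<Sum>a. f a) * (\<Sum>b. g b)"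
  by simp

lemma suminf_add3_ennreal:
  fixes f g h :: "nat \<Rightarrow> ennreal"
  shows "(\<Sum>n. f n + g n + h n) = suminf f + suminf g + suminf h"
  by (simp add: suminf_add[symmetric])

lemma main_ind:
  fixes S :: ennreal
  assumes fin: "finite V"
    and S_def: "S = (\<Sum>t. of_nat t * (SUP y\<in>V. killed_p V E W0 t y y))"
  shows "distinct g \<Longrightarrow> g \<noteq> [] \<Longrightarrow> last g = u \<Longrightarrow> u \<in> W \<Longrightarrow> set g \<subseteq> V
    \<Longrightarrow> (\<forall>y\<in>set (butlast g). y \<notin> W) \<Longrightarrow> W0 \<subseteq> W
    \<Longrightarrow> (\<Sum>T. of_nat T * (\<Sum>w\<in>event_paths V W (hd g) u g T. path_prob V E w))
        \<le> of_nat (length g - 1) * (1 + S) * (\<Sum>T. \<Sum>w\<in>event_paths V W (hd g) u g T. path_prob V E w)"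
proof (induction g arbitrary: W rule: induct_list012)
  case 1
  then show ?case by simp
next
  case (2 x)
  have e: "event_paths V W x u [x] T = {}" if "T > 0" for T
    using 2 that by (auto simp: event_paths_def)
  have z: "of_nat T * (\<Sum>w\<in>event_paths V W (hd [x]) u [x] T. path_prob V E w) = 0" for T
    using e[of T] by (cases T) auto
  have "(\<Sum>T. of_nat T * (\<Sum>w\<in>event_paths V W (hd [x]) u [x] T. path_prob V E w)) = 0"
    unfolding z by simp
  then show ?case by simp
next
  case (3 x y zs)
  define gr where "gr = y # zs"
  define W' where "W' = insert x W"
  define F' where "F' = (\<lambda>b. \<Sum>w\<in>event_paths V W' (hd gr) u gr b. path_prob V E w)"
  define k where "k = (\<lambda>a. killed_p V E W a x x)"
  define c where "c = ennreal (lazy_P V E x (hd gr))"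
  have dist: "distinct (x # gr)" and ne: "gr \<noteq> []" and lu: "last gr = u"
    using "3.prems" by (auto simp: gr_def)
  have IH: "(\<Sum>T. of_nat T * F' T) \<le> of_nat (length gr - 1) * (1 + S) * (\<Sum>T. F' T)"
    unfolding F'_def W'_def gr_def
    using "3.prems" by (intro "3.IH") (auto dest: in_set_butlastD)
  have F: "(\<Sum>w\<in>event_paths V W (hd (x # gr)) u (x # gr) T. path_prob V E w)
      = (\<Sum>a<T. k a * c * F' (T - Suc a))" for T
    unfolding F'_def k_def c_def W'_def using decomp_sum[OF fin dist ne lu] by simp
  have P: "(\<Sum>T. \<Sum>w\<in>event_paths V W (hd (x # gr)) u (x # gr) T. path_prob V E w)
      = (\<Sum>a. k a) * c * (\<Sum>b. F' b)"
    unfolding F cauchy_ennreal[of "\<lambda>a b. k a * c * F' b"] by (simp add: mult.assoc)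
  have "(\<Sum>T. of_nat T * (\<Sum>w\<in>event_paths V W (hd (x # gr)) u (x # gr) T. path_prob V E w))
      = (\<Sum>T. \<Sum>a<T. of_nat (Suc a + (T - Suc a)) * (k a * c * F' (T - Suc a)))"
    unfolding F sum_distrib_left by (intro suminf_cong sum.cong refl) simp
  also have "\<dots> = (\<Sum>a. \<Sum>b. of_nat (Suc a + b) * (k a * c * F' b))"
    by (rule cauchy_ennreal)
  also have "\<dots> = (\<Sum>a. \<Sum>b. (of_nat a * k a) * (c * F' b) + k a * (c * F' b) + k a * (c * (of_nat b * F' b)))"
    by (intro suminf_cong) (simp add: algebra_simps)
  also have "\<dots> = (\<Sum>a. of_nat a * k a) * c * (\<Sum>b. F' b) + (\<Sum>a. k a) * c * (\<Sum>b. F' b)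
       + (\<Sum>a. k a) * c * (\<Sum>b. of_nat b * F' b)"
    by (simp only: suminf_add3_ennreal ennreal_suminf_cmult ennreal_suminf_multc) (simp only: mult.assoc)
  finally have M: "(\<Sum>T. of_nat T * (\<Sum>w\<in>event_paths V W (hd (x # gr)) u (x # gr) T. path_prob V E w))
      = (\<Sum>a. of_nat a * k a) * c * (\<Sum>b. F' b) + (\<Sum>a. k a) * c * (\<Sum>b. F' b)
       + (\<Sum>a. k a) * c * (\<Sum>b. of_nat b * F' b)" .
  have xV: "x \<in> V" and xW: "x \<notin> W" using "3.prems" by auto
  have K0: "1 \<le> (\<Sum>a. k a)"
  proof -
    have "k 0 = 1" unfolding k_def using killed_p_zero[OF xV xW] .
    moreover have "(\<Sum>a<1. k a) \<le> (\<Sum>a. k a)" by (rule sum_le_suminf) auto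
    ultimately show ?thesis by simp
  qed
  have K1: "(\<Sum>a. of_nat a * k a) \<le> S"
    unfolding S_def k_def
  proof (rule suminf_le)
    fix a
    have "killed_p V E W a x x \<le> killed_p V E W0 a x x"
      using killed_p_mono[OF fin] "3.prems" by auto
    also have "\<dots> \<le> (SUP y\<in>V. killed_p V E W0 a y y)" using xV by (rule SUP_upper)
    finally show "of_nat a * killed_p V E W a x x \<le> of_nat a * (SUP y\<in>V. killed_p V E W0 a y y)"
      by (rule mult_left_mono) simp
  qed auto
  have K1': "(\<Sum>a. of_nat a * k a) \<le> S * (\<Sum>a. k a)"
    using K1 mult_left_mono[OF K0, of S] by simp
  define K0v where "K0v = (\<Sum>a. k a)"
  define p' where "p' = (\<Sum>b. F' b)"
  define m' where "m' = (\<Sum>b. of_nat b * F' b)"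
  define l' where "l' = length gr - 1"
  have "(\<Sum>a. of_nat a * k a) * c * p' + K0v * c * p' + K0v * c * m'
      \<le> (S * K0v) * c * p' + K0v * c * p' + K0v * c * (of_nat l' * (1 + S) * p')"
    using K1' IH unfolding K0v_def p'_def m'_def l'_def
    by (intro add_mono mult_right_mono mult_left_mono order_refl) auto
  also have "\<dots> = of_nat (Suc l') * (1 + S) * (K0v * c * p')"
    by (simp add: algebra_simps)
  finally have "(\<Sum>a. of_nat a * k a) * c * p' + K0v * c * p' + K0v * c * m'
      \<le> of_nat (Suc l') * (1 + S) * (K0v * c * p')" .
  moreover have "length (x # gr) - 1 = Suc l'" using ne unfolding l'_def by simp
  ultimately show ?case
    using M P unfolding K0v_def p'_def m'_def gr_def by simp
qed

theorem mainTheorem12: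
  fixes V W :: "'a set" and E :: "'a \<Rightarrow> 'a \<Rightarrow> bool" and \<gamma> :: "'a list"
    and l :: nat and u v :: 'a
  assumes "simple_graph V E" and "graph_connected V E"
    and "W \<subseteq> V" and "W \<noteq> {}"
    and "l \<ge> 1" and "length \<gamma> = l + 1" and "distinct \<gamma>"
    and "\<forall>i<l. E (\<gamma> ! i) (\<gamma> ! Suc i)"
    and "v = \<gamma> ! 0" and "\<forall>i<l. \<gamma> ! i \<notin> W" and "\<gamma> ! l = u" and "u \<in> W"
  shows "cond_exp_hit V E W v u \<gamma> \<le> of_nat l * bubble_sum V E W"
proof -
  have fin: "finite V" using assms(1) by (simp add: simple_graph_def)
  define S where "S = (\<Sum>t. of_nat t * (SUP y\<in>V. killed_p V E W t y y))"
  have ne: "\<gamma> \<noteq> []" using assms(6) by auto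
  have lu: "last \<gamma> = u" using assms(6,11) ne by (simp add: last_conv_nth)
  have hd: "hd \<gamma> = v" using assms(9) ne by (simp add: hd_conv_nth)
  have sV: "set \<gamma> \<subseteq> V"
  proof
    fix y assume "y \<in> set \<gamma>"
    then obtain i where i: "i < length \<gamma>" "\<gamma> ! i = y" by (metis in_set_conv_nth)
    show "y \<in> V"
    proof (cases "i < l")
      case True then show ?thesis using assms(1,8) i by (auto simp: simple_graph_def)
    next
      case False then have "i = l" using i assms(6) by simp
      moreover have "E (\<gamma> ! (l - 1)) (\<gamma> ! Suc (l - 1))" using assms(5,8) by (metis diff_less zero_less_one less_le_trans)
      moreover have "Suc (l - 1) = l" using assms(5) by simp
      ultimately show ?thesis using assms(1) i by (auto simp: simple_graph_def)
    qed
  qed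
  have bl: "\<forall>y\<in>set (butlast \<gamma>). y \<notin> W"
  proof
    fix y assume "y \<in> set (butlast \<gamma>)"
    then obtain i where i: "i < length (butlast \<gamma>)" "butlast \<gamma> ! i = y" by (metis in_set_conv_nth)
    then have "i < l" "\<gamma> ! i = y" using assms(6) by (auto simp: nth_butlast)
    then show "y \<notin> W" using assms(10) by auto
  qed
  have key: "event_time V E W v u \<gamma> \<le> of_nat l * (1 + S) * event_prob V E W v u \<gamma>"
    using main_ind[OF fin S_def assms(7) ne lu assms(12) sV bl order_refl] assms(6) hd
    unfolding event_time_def event_prob_def by simp
  have C: "1 + S \<le> bubble_sum V E W"
  proof -
    let ?s = "\<lambda>t. (SUP y\<in>V. killed_p V E W t y y)"
    have vV: "v \<in> V" using sV hd ne by auto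
    have vW: "v \<notin> W" using assms(5,9,10) by auto
    have "1 \<le> ?s 0" using killed_p_zero[OF vV vW, of E] SUP_upper[OF vV, of "\<lambda>y. killed_p V E W 0 y y"] by simp
    also have "?s 0 = (\<Sum>t<1. ?s t)" by simp
    also have "\<dots> \<le> (\<Sum>t. ?s t)" by (rule sum_le_suminf) auto
    finally have "1 + S \<le> (\<Sum>t. ?s t) + S" by (rule add_right_mono)
    also have "\<dots> = (\<Sum>t. ?s t + of_nat t * ?s t)" unfolding S_def by (simp add: suminf_add)
    also have "\<dots> = bubble_sum V E W" unfolding bubble_sum_def
      by (intro suminf_cong) (simp add: algebra_simps)
    finally show ?thesis .
  qed
  have "cond_exp_hit V E W v u \<gamma> \<le> of_nat l * (1 + S)"
  proof (cases "event_prob V E W v u \<gamma> = 0")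
    case True
    then have "event_time V E W v u \<gamma> = 0" using key by simp
    then show ?thesis using True by (simp add: cond_exp_hit_def)
  next
    case False
    then show ?thesis unfolding cond_exp_hit_def
      by (intro divide_le_posI_ennreal) (use key in \<open>auto simp: mult.commute zero_less_iff_neq_zero\<close>)
  qed
  also have "\<dots> \<le> of_nat l * bubble_sum V E W" using C by (rule mult_left_mono) simp
  finally show ?thesis .
qed

end
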